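(* Let $\nu\ge\frac12$. Then for all $x>0$, $$I_{\nu+1}^2(x)-I_\nu(x)I_{\nu+2}(x)<\frac{2\nu}{x}I_\nu(x)I_{\nu+1}(x).$$ Consequently, if $K>\nu+1$ and $r>0$ satisfies $r=\Psi_\nu(2Kr)$ with $\Psi_\nu(x)=I_{\nu+1}(x)/I_\nu(x)$, then $$r<\sqrt{1-\frac{1}{K}}.$$
   Context: $I_\nu$ denotes the modified Bessel function of the first kind of order $\nu$. *)

theory Defs
  imports "HOL-Analysis.Analysis"
begin

definition besselI :: "real \<Rightarrow> real \<Rightarrow> real" where
  "besselI \<nu> x = (\<Sum>k. (x / 2) powr (2 * real k + \<nu>) / (fact k * Gamma (real k + \<nu> + 1)))"

definition Psi :: "real \<Rightarrow> real \<Rightarrow> real" where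
  "Psi \<nu> x = besselI (\<nu> + 1) x / besselI \<nu> x"

end

theory Submission
  imports Defs
begin

lemma Gp1: "(z::real) > 0 \<Longrightarrow> Gamma (z + 1) = z * Gamma z"
  by (rule Gamma_plus1) (auto dest: nonpos_Ints_nonpos)

lemma poch_G: "(z::real) > 0 \<Longrightarrow> Gamma (z + real n) = Gamma z * pochhammer z n"
proof (induction n)
  case 0 then show ?case by simp
next
  case (Suc n)
  have "Gamma (z + real (Suc n)) = Gamma ((z + real n) + 1)" by (simp add: add_ac)
  also have "\<dots> = (z + real n) * Gamma (z + real n)" using Suc.prems by (intro Gp1) auto
  also have "\<dots> = Gamma z * pochhammer z (Suc n)" using Suc by (simp add: pochhammer_Suc)
  finally show ?case .
qed

lemma poch_conv:
  fixes a b :: real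
  shows "(\<Sum>k\<le>n. of_nat (n choose k) * pochhammer (b + real n - real k) k * pochhammer (a + real k) (n - k))
        = pochhammer (a + b + real n - 1) n"
proof -
  have "pochhammer (-(b + real n - 1) + -(a + real n - 1)) n
        = (\<Sum>k\<le>n. of_nat (n choose k) * pochhammer (-(b + real n - 1)) k * pochhammer (-(a + real n - 1)) (n - k))"
    by (rule pochhammer_binomial_sum)
  also have "\<dots> = (\<Sum>k\<le>n. (-1)^n * (of_nat (n choose k) * pochhammer (b + real n - real k) k * pochhammer (a + real k) (n - k)))"
  proof (rule sum.cong[OF refl])
    fix k assume k: "k \<in> {..n}"
    have 1: "pochhammer (-(b + real n - 1)) k = (-1)^k * pochhammer (b + real n - real k) k"
      by (subst pochhammer_minus) (simp add: algebra_simps)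
    have 2: "pochhammer (-(a + real n - 1)) (n-k) = (-1)^(n-k) * pochhammer (a + real k) (n-k)"
      using k by (subst pochhammer_minus) (simp add: algebra_simps of_nat_diff)
    have 3: "(-1::real)^k * (-1)^(n-k) = (-1)^n" using k by (simp flip: power_add)
    show "of_nat (n choose k) * pochhammer (-(b + real n - 1)) k * pochhammer (-(a + real n - 1)) (n - k)
        = (-1)^n * (of_nat (n choose k) * pochhammer (b + real n - real k) k * pochhammer (a + real k) (n - k))"
      unfolding 1 2 using 3 by (simp add: algebra_simps)
  qed
  also have "\<dots> = (-1)^n * (\<Sum>k\<le>n. of_nat (n choose k) * pochhammer (b + real n - real k) k * pochhammer (a + real k) (n - k))"
    by (simp add: sum_distrib_left)
  finally have A: "pochhammer (-(b + real n - 1) + -(a + real n - 1)) n = (-1)^n * (\<Sum>k\<le>n. of_nat (n choose k) * pochhammer (b + real n - real k) k * pochhammer (a + real k) (n - k))" .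
  have B: "pochhammer (-(b + real n - 1) + -(a + real n - 1)) n = (-1)^n * pochhammer (a + b + real n - 1) n"
  proof -
    have e: "-(b + real n - 1) + -(a + real n - 1) = - (a + b + 2 * real n - 2)" by simp
    have e2: "a + b + 2 * real n - 2 - real n + 1 = a + b + real n - 1" by simp
    show ?thesis unfolding e pochhammer_minus e2 ..
  qed
  from A B show ?thesis by simp
qed

definition cf :: "real \<Rightarrow> nat \<Rightarrow> real" where
  "cf \<mu> k = 1 / (fact k * Gamma (real k + \<mu> + 1))"

lemma cf_term:
  fixes a b :: real
  assumes a: "a > 0" and b: "b > 0" and i: "i \<le> n"
  shows "1 / (fact i * Gamma (real i + a) * (fact (n - i) * Gamma (real (n - i) + b)))
     = of_nat (n choose i) * pochhammer (b + real n - real i) i * pochhammer (a + real i) (n - i)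
       / (fact n * Gamma (real n + a) * Gamma (real n + b))"
proof -
  have ga: "Gamma (real n + a) = Gamma (real i + a) * pochhammer (a + real i) (n - i)"
  proof -
    have "Gamma (real n + a) = Gamma (a + real (i + (n - i)))" using i by (simp add: add_ac)
    also have "\<dots> = Gamma a * pochhammer a (i + (n - i))" using a by (rule poch_G)
    also have "\<dots> = Gamma a * pochhammer a i * pochhammer (a + real i) (n - i)"
      by (simp add: pochhammer_product')
    also have "Gamma a * pochhammer a i = Gamma (real i + a)" using poch_G[OF a, of i] by (simp add: add_ac)
    finally show ?thesis .
  qed
  have gb: "Gamma (real n + b) = Gamma (real (n - i) + b) * pochhammer (b + real n - real i) i"
  proof -
    have "Gamma (real n + b) = Gamma (b + real ((n - i) + i))" using i by (simp add: add_ac)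
    also have "\<dots> = Gamma b * pochhammer b ((n - i) + i)" using b by (rule poch_G)
    also have "\<dots> = Gamma b * pochhammer b (n - i) * pochhammer (b + real (n - i)) i"
      by (simp add: pochhammer_product')
    also have "Gamma b * pochhammer b (n - i) = Gamma (real (n - i) + b)" using poch_G[OF b, of "n-i"] by (simp add: add_ac)
    also have "b + real (n - i) = b + real n - real i" using i by (simp add: of_nat_diff)
    finally show ?thesis .
  qed
  have ch: "real (n choose i) = fact n / (fact i * fact (n - i))" using i by (rule binomial_fact)
  have p1: "pochhammer (a + real i) (n - i) > 0" using a by (intro pochhammer_pos) auto
  have p2: "pochhammer (b + real n - real i) i > 0" using b i by (intro pochhammer_pos) auto
  have g1: "Gamma (real i + a) > 0" "Gamma (real (n - i) + b) > 0" using a b by auto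
  have f: "(fact i :: real) > 0" "(fact (n-i) :: real) > 0" "(fact n :: real) > 0" by auto
  show ?thesis unfolding ga gb ch using p1 p2 g1 f by (simp add: field_simps)
qed

lemma conv_G:
  assumes "\<mu>1 \<ge> 0" "\<mu>2 \<ge> 0"
  shows "(\<Sum>i\<le>n. cf \<mu>1 i * cf \<mu>2 (n - i))
    = Gamma (2 * real n + \<mu>1 + \<mu>2 + 1) / (fact n * Gamma (real n + \<mu>1 + \<mu>2 + 1) * Gamma (real n + \<mu>1 + 1) * Gamma (real n + \<mu>2 + 1))"
proof -
  define a where "a = \<mu>1 + 1"
  define b where "b = \<mu>2 + 1"
  have a: "a > 0" and b: "b > 0" using assms by (auto simp: a_def b_def)
  have "(\<Sum>i\<le>n. cf \<mu>1 i * cf \<mu>2 (n - i))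
     = (\<Sum>i\<le>n. of_nat (n choose i) * pochhammer (b + real n - real i) i * pochhammer (a + real i) (n - i)
       / (fact n * Gamma (real n + a) * Gamma (real n + b)))"
  proof (rule sum.cong[OF refl])
    fix i assume "i \<in> {..n}"
    then have i: "i \<le> n" by simp
    show "cf \<mu>1 i * cf \<mu>2 (n - i) = of_nat (n choose i) * pochhammer (b + real n - real i) i * pochhammer (a + real i) (n - i)
       / (fact n * Gamma (real n + a) * Gamma (real n + b))"
      using cf_term[OF a b i] by (simp add: cf_def a_def b_def add_ac)
  qed
  also have "\<dots> = pochhammer (a + b + real n - 1) n / (fact n * Gamma (real n + a) * Gamma (real n + b))"
    by (simp add: sum_divide_distrib[symmetric] poch_conv)
  also have "pochhammer (a + b + real n - 1) n = Gamma (2 * real n + \<mu>1 + \<mu>2 + 1) / Gamma (real n + \<mu>1 + \<mu>2 + 1)"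
  proof -
    have z: "a + b + real n - 1 > 0" using assms by (simp add: a_def b_def)
    have e: "a + b + real n - 1 = real n + \<mu>1 + \<mu>2 + 1" by (simp add: a_def b_def)
    have "Gamma ((real n + \<mu>1 + \<mu>2 + 1) + real n) = Gamma (real n + \<mu>1 + \<mu>2 + 1) * pochhammer (real n + \<mu>1 + \<mu>2 + 1) n"
      by (rule poch_G) (use z e in simp)
    moreover have "(real n + \<mu>1 + \<mu>2 + 1) + real n = 2 * real n + \<mu>1 + \<mu>2 + 1" by simp
    moreover note e
    moreover have "Gamma (real n + \<mu>1 + \<mu>2 + 1) > 0" using z e by auto
    ultimately show ?thesis by (simp add: field_simps)
  qed
  finally show ?thesis by (simp add: a_def b_def add_ac)
qed


lemma cf_pos: "\<mu> \<ge> 0 \<Longrightarrow> cf \<mu> k > 0"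
  unfolding cf_def by (intro divide_pos_pos mult_pos_pos) auto

lemma cf_Suc: "\<mu> \<ge> 0 \<Longrightarrow> cf \<mu> (Suc k) = cf \<mu> k / ((real k + 1) * (real k + \<mu> + 1))"
proof -
  assume m: "\<mu> \<ge> 0"
  have "Gamma (real (Suc k) + \<mu> + 1) = (real k + \<mu> + 1) * Gamma (real k + \<mu> + 1)"
    using Gp1[of "real k + \<mu> + 1"] m by (simp add: add_ac)
  moreover have "Gamma (real k + \<mu> + 1) > 0" using m by auto
  ultimately show ?thesis using m unfolding cf_def by (simp add: field_simps)
qed

lemma summ: assumes m: "\<mu> \<ge> 0" and y: "y \<ge> 0" shows "summable (\<lambda>k. y^k * cf \<mu> k)"
proof (rule summable_ratio_test[where c = "1/2" and N = "nat \<lceil>2*y\<rceil>"])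
  fix n assume n: "n \<ge> nat \<lceil>2*y\<rceil>"
  have n2: "real n \<ge> 2 * y" using n by linarith
  have c: "cf \<mu> n > 0" using m by (rule cf_pos)
  have d: "(real n + 1) * (real n + \<mu> + 1) \<ge> real n + 1"
  proof -
    have "0 \<le> (real n + 1) * (real n + \<mu>)" using m by simp
    then show ?thesis by (simp add: algebra_simps)
  qed
  have "y^(Suc n) * cf \<mu> (Suc n) = (y^n * cf \<mu> n) * (y / ((real n + 1) * (real n + \<mu> + 1)))"
    using cf_Suc[OF m, of n] by (simp add: field_simps)
  also have "\<dots> \<le> (y^n * cf \<mu> n) * (1/2)"
  proof (rule mult_left_mono)
    show "y / ((real n + 1) * (real n + \<mu> + 1)) \<le> 1/2"
    proof -
      have pos: "(real n + 1) * (real n + \<mu> + 1) > 0" using m by simp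
      have "2 * y \<le> (real n + 1) * (real n + \<mu> + 1)" using d n2 by linarith
      then show ?thesis using pos by (simp add: divide_le_eq)
    qed
    show "0 \<le> y ^ n * cf \<mu> n" using y c by simp
  qed
  finally show "norm (y^(Suc n) * cf \<mu> (Suc n)) \<le> 1/2 * norm (y^n * cf \<mu> n)"
    using y c cf_pos[OF m, of "Suc n"] by (simp add: mult_ac abs_mult)
qed simp

definition ser :: "real \<Rightarrow> real \<Rightarrow> real" where "ser \<mu> y = (\<Sum>k. y^k * cf \<mu> k)"

lemma ser_pos: "\<mu> \<ge> 0 \<Longrightarrow> y \<ge> 0 \<Longrightarrow> ser \<mu> y > 0"
proof -
  assume m: "\<mu> \<ge> 0" and y: "y \<ge> 0"
  show ?thesis unfolding ser_def
  proof (rule suminf_pos2[where i=0])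
    show "summable (\<lambda>k. y^k * cf \<mu> k)" using m y by (rule summ)
    fix n show "0 \<le> y^n * cf \<mu> n" using cf_pos[OF m, of n] y by simp
  next
    show "0 < y^0 * cf \<mu> 0" using cf_pos[OF m] by simp
  qed
qed

lemma bessel_ser:
  assumes x: "x > 0" and m: "\<mu> \<ge> 0"
  shows "besselI \<mu> x = (x/2) powr \<mu> * ser \<mu> ((x/2)^2)"
proof -
  have t: "x/2 > 0" using x by simp
  have "\<And>k. (x / 2) powr (2 * real k + \<mu>) / (fact k * Gamma (real k + \<mu> + 1))
      = (x/2) powr \<mu> * (((x/2)^2)^k * cf \<mu> k)"
  proof -
    fix k
    have "(x / 2) powr (2 * real k + \<mu>) = (x/2) powr (2 * real k) * (x/2) powr \<mu>"
      by (simp add: powr_add)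
    also have "(x/2) powr (2 * real k) = ((x/2)^2)^k"
      using powr_realpow[OF t, of "2*k"] by (simp add: power_mult)
    finally show "(x / 2) powr (2 * real k + \<mu>) / (fact k * Gamma (real k + \<mu> + 1))
      = (x/2) powr \<mu> * (((x/2)^2)^k * cf \<mu> k)" by (simp add: cf_def)
  qed
  then have "besselI \<mu> x = (\<Sum>k. (x/2) powr \<mu> * (((x/2)^2)^k * cf \<mu> k))"
    unfolding besselI_def by simp
  also have "\<dots> = (x/2) powr \<mu> * ser \<mu> ((x/2)^2)"
    unfolding ser_def by (rule suminf_mult[OF summ[OF m]]) simp
  finally show ?thesis .
qed

definition P :: "real \<Rightarrow> real \<Rightarrow> nat \<Rightarrow> real" where
  "P a b n = (\<Sum>i\<le>n. cf a i * cf b (n - i))"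

lemma ser_prod:
  assumes "a \<ge> 0" "b \<ge> 0" "y \<ge> 0"
  shows "(\<lambda>n. y^n * P a b n) sums (ser a y * ser b y)"
proof -
  have sa: "summable (\<lambda>k. norm (y^k * cf a k))" using summ[of a y] assms cf_pos[of a]
    by (simp add: abs_mult less_imp_le)
  have sb: "summable (\<lambda>k. norm (y^k * cf b k))" using summ[of b y] assms cf_pos[of b]
    by (simp add: abs_mult less_imp_le)
  have "(\<lambda>k. \<Sum>i\<le>k. (y^i * cf a i) * (y^(k-i) * cf b (k - i))) sums (ser a y * ser b y)"
    unfolding ser_def by (rule Cauchy_product_sums[OF sa sb])
  moreover have "\<And>k. (\<Sum>i\<le>k. (y^i * cf a i) * (y^(k-i) * cf b (k - i))) = y^k * P a b k"
  proof -
    fix k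
    have "(\<Sum>i\<le>k. (y^i * cf a i) * (y^(k-i) * cf b (k - i))) = (\<Sum>i\<le>k. y^k * (cf a i * cf b (k - i)))"
      by (rule sum.cong[OF refl]) (auto simp: power_add[symmetric] mult_ac)
    then show "(\<Sum>i\<le>k. (y^i * cf a i) * (y^(k-i) * cf b (k - i))) = y^k * P a b k"
      by (simp add: P_def sum_distrib_left)
  qed
  ultimately show ?thesis by simp
qed


lemma coef:
  assumes nu: "\<nu> \<ge> 1/2"
  shows "\<nu> * P \<nu> (\<nu>+1) (Suc n) - P (\<nu>+1) (\<nu>+1) n + P \<nu> (\<nu>+2) n \<ge> 0"
proof -
  define q where "q = real n + \<nu> + 1"
  define G1 where "G1 = Gamma (2 * real n + 2 * \<nu> + 3)"
  define G2 where "G2 = Gamma (real n + 2 * \<nu> + 3)"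
  define G3 where "G3 = Gamma q"
  have q: "q > 0" using nu by (simp add: q_def)
  have pos: "G1 > 0" "G2 > 0" "G3 > 0" using nu q by (auto simp: G1_def G2_def G3_def)
  have Gq1: "Gamma (q + 1) = q * G3" using Gp1[OF q] by (simp add: G3_def)
  have Gq2: "Gamma (q + 2) = (q + 1) * q * G3"
    using Gp1[of "q+1"] q Gq1 by (simp add: add.assoc)
  have Pa: "P \<nu> (\<nu>+1) (Suc n) = (2 * real n + 2 * \<nu> + 3) * G1 / (fact (Suc n) * G2 * (q * G3) * ((q + 1) * q * G3))"
  proof -
    have e1: "Gamma (2 * real (Suc n) + \<nu> + (\<nu> + 1) + 1) = (2 * real n + 2 * \<nu> + 3) * G1"
      using Gp1[of "2 * real n + 2 * \<nu> + 3"] nu by (simp add: G1_def algebra_simps)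
    have e2: "Gamma (real (Suc n) + \<nu> + (\<nu> + 1) + 1) = G2"
      by (simp add: G2_def algebra_simps)
    have e3: "Gamma (real (Suc n) + \<nu> + 1) = q * G3" using Gq1 by (simp add: q_def algebra_simps)
    have e4: "Gamma (real (Suc n) + (\<nu> + 1) + 1) = (q + 1) * q * G3" using Gq2 by (simp add: q_def algebra_simps)
    have n0: "\<nu> \<ge> 0" "\<nu> + 1 \<ge> 0" using nu by auto
    show ?thesis unfolding P_def conv_G[OF n0, of "Suc n"]
      by (simp only: e1 e2 e3 e4)
  qed
  have Pb: "P (\<nu>+1) (\<nu>+1) n = G1 / (fact n * G2 * (q * G3) * (q * G3))"
  proof -
    have e1: "Gamma (2 * real n + (\<nu> + 1) + (\<nu> + 1) + 1) = G1"
      by (simp add: G1_def algebra_simps)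
    have e2: "Gamma (real n + (\<nu> + 1) + (\<nu> + 1) + 1) = G2"
      by (simp add: G2_def algebra_simps)
    have e3: "Gamma (real n + (\<nu> + 1) + 1) = q * G3" using Gq1 by (simp add: q_def algebra_simps)
    have n0: "\<nu> + 1 \<ge> 0" using nu by auto
    show ?thesis unfolding P_def conv_G[OF n0 n0, of n]
      by (simp only: e1 e2 e3)
  qed
  have Pc: "P \<nu> (\<nu>+2) n = G1 / (fact n * G2 * G3 * ((q + 1) * q * G3))"
  proof -
    have e1: "Gamma (2 * real n + \<nu> + (\<nu> + 2) + 1) = G1"
      by (simp add: G1_def algebra_simps)
    have e2: "Gamma (real n + \<nu> + (\<nu> + 2) + 1) = G2"
      by (simp add: G2_def algebra_simps)
    have e3: "Gamma (real n + \<nu> + 1) = G3" by (simp add: q_def G3_def)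
    have e4: "Gamma (real n + (\<nu> + 2) + 1) = (q + 1) * q * G3" using Gq2 by (simp add: q_def algebra_simps)
    have n0: "\<nu> \<ge> 0" "\<nu> + 2 \<ge> 0" using nu by auto
    show ?thesis unfolding P_def conv_G[OF n0, of n]
      by (simp only: e1 e2 e3 e4)
  qed
  define D where "D = G1 / (fact n * G2 * (q * G3) * (q * G3))"
  have Dpos: "D > 0" using pos q by (simp add: D_def)
  have eq: "\<nu> * P \<nu> (\<nu>+1) (Suc n) - P (\<nu>+1) (\<nu>+1) n + P \<nu> (\<nu>+2) n
      = D * (\<nu> * (2 * real n + 2 * \<nu> + 3) - (real n + 1)) / ((real n + 1) * (q + 1))"
  proof -
    have h: "real n + 1 > 0" "q + 1 > 0" "(fact n :: real) > 0" using q by auto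
    show ?thesis unfolding Pa Pb Pc D_def using pos q h
      by (simp add: divide_simps fact_Suc) (simp add: algebra_simps)
  qed
  have "\<nu> * (2 * real n + 2 * \<nu> + 3) - (real n + 1) \<ge> 0"
  proof -
    have "\<nu> * (2 * real n + 2 * \<nu> + 3) \<ge> (1/2) * (2 * real n + 2 * \<nu> + 3)"
      using nu by (intro mult_right_mono) auto
    moreover have "(1/2) * (2 * real n + 2 * \<nu> + 3) = real n + \<nu> + 3/2" by simp
    ultimately show ?thesis using nu by linarith
  qed
  then show ?thesis unfolding eq using Dpos q by simp
qed


lemma key:
  assumes nu: "\<nu> \<ge> 1/2" and y: "y \<ge> 0"
  shows "y * ((ser (\<nu>+1) y)^2 - ser \<nu> y * ser (\<nu>+2) y) < \<nu> * ser \<nu> y * ser (\<nu>+1) y"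
proof -
  define f where "f = ser \<nu> y"
  define g where "g = ser (\<nu>+1) y"
  define h where "h = ser (\<nu>+2) y"
  have n0: "\<nu> \<ge> 0" "\<nu> + 1 \<ge> 0" "\<nu> + 2 \<ge> 0" using nu by auto
  have A: "(\<lambda>n. y^n * P \<nu> (\<nu>+1) n) sums (f*g)" unfolding f_def g_def using n0 y by (intro ser_prod) auto
  have B: "(\<lambda>n. y^n * P (\<nu>+1) (\<nu>+1) n) sums (g*g)" unfolding g_def using n0 y by (intro ser_prod) auto
  have C: "(\<lambda>n. y^n * P \<nu> (\<nu>+2) n) sums (f*h)" unfolding f_def h_def using n0 y by (intro ser_prod) auto
  define p0 where "p0 = P \<nu> (\<nu>+1) 0"
  have p0: "p0 > 0" unfolding p0_def P_def using cf_pos[OF n0(1)] cf_pos[OF n0(2)] by simp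
  have A': "(\<lambda>n. y^(Suc n) * P \<nu> (\<nu>+1) (Suc n)) sums (f*g - p0)"
    using A by (subst sums_Suc_iff) (simp add: p0_def)
  have S: "(\<lambda>n. \<nu> * (y^(Suc n) * P \<nu> (\<nu>+1) (Suc n)) - y * (y^n * P (\<nu>+1) (\<nu>+1) n) + y * (y^n * P \<nu> (\<nu>+2) n))
      sums (\<nu> * (f*g - p0) - y * (g*g) + y * (f*h))"
    by (rule sums_add[OF sums_diff[OF sums_mult[OF A', of \<nu>] sums_mult[OF B, of y]] sums_mult[OF C, of y]])
  have T: "\<And>n. \<nu> * (y^(Suc n) * P \<nu> (\<nu>+1) (Suc n)) - y * (y^n * P (\<nu>+1) (\<nu>+1) n) + y * (y^n * P \<nu> (\<nu>+2) n)
      = y^(Suc n) * (\<nu> * P \<nu> (\<nu>+1) (Suc n) - P (\<nu>+1) (\<nu>+1) n + P \<nu> (\<nu>+2) n)"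
    by (simp add: algebra_simps)
  have "0 \<le> \<nu> * (f*g - p0) - y * (g*g) + y * (f*h)"
  proof -
    have S': "(\<lambda>n. y^(Suc n) * (\<nu> * P \<nu> (\<nu>+1) (Suc n) - P (\<nu>+1) (\<nu>+1) n + P \<nu> (\<nu>+2) n))
      sums (\<nu> * (f*g - p0) - y * (g*g) + y * (f*h))" using S unfolding T .
    have nn: "\<And>n. 0 \<le> y^(Suc n) * (\<nu> * P \<nu> (\<nu>+1) (Suc n) - P (\<nu>+1) (\<nu>+1) n + P \<nu> (\<nu>+2) n)"
      using coef[OF nu] y by simp
    show ?thesis by (rule sums_le[OF nn sums_zero S'])
  qed
  moreover have "\<nu> * p0 > 0" using p0 nu by simp
  ultimately have "y * (g*g - f*h) < \<nu> * f * g" by (simp add: algebra_simps)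
  then show ?thesis by (simp add: f_def g_def h_def power2_eq_square)
qed

lemma recur:
  assumes nu: "\<nu> \<ge> 0" and y: "y \<ge> 0"
  shows "ser \<nu> y - y * ser (\<nu>+2) y = (\<nu>+1) * ser (\<nu>+1) y"
proof -
  have n0: "\<nu> + 1 \<ge> 0" "\<nu> + 2 \<ge> 0" using nu by auto
  have F: "(\<lambda>n. y^n * cf \<nu> n) sums ser \<nu> y" unfolding ser_def using summ[OF nu y] by (rule summable_sums)
  have G: "(\<lambda>n. y^n * cf (\<nu>+1) n) sums ser (\<nu>+1) y" unfolding ser_def using summ[OF n0(1) y] by (rule summable_sums)
  have H: "(\<lambda>n. y^n * cf (\<nu>+2) n) sums ser (\<nu>+2) y" unfolding ser_def using summ[OF n0(2) y] by (rule summable_sums)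
  have F': "(\<lambda>n. y^(Suc n) * cf \<nu> (Suc n)) sums (ser \<nu> y - cf \<nu> 0)"
    using F by (subst sums_Suc_iff) simp
  have G': "(\<lambda>n. y^(Suc n) * cf (\<nu>+1) (Suc n)) sums (ser (\<nu>+1) y - cf (\<nu>+1) 0)"
    using G by (subst sums_Suc_iff) simp
  have coefeq: "\<And>n. cf \<nu> (Suc n) - cf (\<nu>+2) n = (\<nu>+1) * cf (\<nu>+1) (Suc n)"
  proof -
    fix n
    have g: "Gamma (real n + \<nu> + 3) = (real n + \<nu> + 2) * Gamma (real n + \<nu> + 2)"
      using Gp1[of "real n + \<nu> + 2"] nu by (simp add: add.assoc)
    have gp: "Gamma (real n + \<nu> + 2) > 0" using nu by auto
    have e1: "cf \<nu> (Suc n) = 1 / ((real n + 1) * fact n * Gamma (real n + \<nu> + 2))"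
      by (simp add: cf_def fact_Suc algebra_simps)
    have e2: "cf (\<nu>+2) n = 1 / (fact n * Gamma (real n + \<nu> + 3))"
      by (simp add: cf_def algebra_simps)
    have e3: "cf (\<nu>+1) (Suc n) = 1 / ((real n + 1) * fact n * Gamma (real n + \<nu> + 3))"
      by (simp add: cf_def fact_Suc algebra_simps)
    show "cf \<nu> (Suc n) - cf (\<nu>+2) n = (\<nu>+1) * cf (\<nu>+1) (Suc n)"
    proof -
      have h: "real n + \<nu> + 2 > 0" "real n + 1 > 0" "(fact n :: real) > 0" using nu by auto
      define G where "G = Gamma (real n + \<nu> + 2)"
      have "G > 0" using gp by (simp add: G_def)
      then show ?thesis unfolding e1 e2 e3 g G_def[symmetric] using h by (simp add: divide_simps)
    qed
  qed
  have "(\<lambda>n. y^(Suc n) * cf \<nu> (Suc n) - y * (y^n * cf (\<nu>+2) n)) sums (ser \<nu> y - cf \<nu> 0 - y * ser (\<nu>+2) y)"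
    by (rule sums_diff[OF F' sums_mult[OF H, of y]])
  moreover have "\<And>n. y^(Suc n) * cf \<nu> (Suc n) - y * (y^n * cf (\<nu>+2) n) = (\<nu>+1) * (y^(Suc n) * cf (\<nu>+1) (Suc n))"
  proof -
    fix n
    have "y^(Suc n) * cf \<nu> (Suc n) - y * (y^n * cf (\<nu>+2) n) = y^(Suc n) * (cf \<nu> (Suc n) - cf (\<nu>+2) n)"
      by (simp add: algebra_simps)
    then show "y^(Suc n) * cf \<nu> (Suc n) - y * (y^n * cf (\<nu>+2) n) = (\<nu>+1) * (y^(Suc n) * cf (\<nu>+1) (Suc n))"
      unfolding coefeq by (simp only: mult_ac)
  qed
  ultimately have "(\<lambda>n. (\<nu>+1) * (y^(Suc n) * cf (\<nu>+1) (Suc n))) sums (ser \<nu> y - cf \<nu> 0 - y * ser (\<nu>+2) y)" by simp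
  moreover have "(\<lambda>n. (\<nu>+1) * (y^(Suc n) * cf (\<nu>+1) (Suc n))) sums ((\<nu>+1) * (ser (\<nu>+1) y - cf (\<nu>+1) 0))"
    by (rule sums_mult[OF G'])
  ultimately have E: "ser \<nu> y - cf \<nu> 0 - y * ser (\<nu>+2) y = (\<nu>+1) * (ser (\<nu>+1) y - cf (\<nu>+1) 0)"
    by (rule sums_unique2)
  have "cf \<nu> 0 = (\<nu>+1) * cf (\<nu>+1) 0"
  proof -
    have "Gamma (\<nu> + 1 + 1) = (\<nu>+1) * Gamma (\<nu>+1)" using Gp1[of "\<nu>+1"] nu by simp
    moreover have "Gamma (\<nu>+1) > 0" "Gamma (\<nu> + 1 + 1) > 0" using nu by auto
    ultimately show ?thesis by (simp add: cf_def field_simps)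
  qed
  with E show ?thesis by (simp add: algebra_simps)
qed


lemma bessel_parts:
  assumes x: "x > 0" and nu: "\<nu> \<ge> 1/2"
  shows "besselI \<nu> x = (x/2) powr \<nu> * ser \<nu> ((x/2)^2)"
    "besselI (\<nu>+1) x = (x/2) powr \<nu> * (x/2) * ser (\<nu>+1) ((x/2)^2)"
    "besselI (\<nu>+2) x = (x/2) powr \<nu> * (x/2)^2 * ser (\<nu>+2) ((x/2)^2)"
proof -
  have t: "x/2 > 0" using x by simp
  show "besselI \<nu> x = (x/2) powr \<nu> * ser \<nu> ((x/2)^2)" using bessel_ser[OF x] nu by simp
  show "besselI (\<nu>+1) x = (x/2) powr \<nu> * (x/2) * ser (\<nu>+1) ((x/2)^2)"
    using bessel_ser[OF x, of "\<nu>+1"] nu t by (simp add: powr_add)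
  have "(x/2) powr (\<nu>+2) = (x/2) powr \<nu> * (x/2)^2"
    using t by (simp add: powr_add powr_realpow[OF t, of 2, simplified])
  then show "besselI (\<nu>+2) x = (x/2) powr \<nu> * (x/2)^2 * ser (\<nu>+2) ((x/2)^2)"
    using bessel_ser[OF x, of "\<nu>+2"] nu by simp
qed

theorem mainTheorem5:
  fixes \<nu> :: real
  assumes "\<nu> \<ge> 1/2"
  shows "(\<forall>x>0. (besselI (\<nu>+1) x)\<^sup>2 - besselI \<nu> x * besselI (\<nu>+2) x
              < 2 * \<nu> / x * besselI \<nu> x * besselI (\<nu>+1) x)
       \<and> (\<forall>K r. K > \<nu> + 1 \<longrightarrow> r > 0 \<longrightarrow> r = Psi \<nu> (2 * K * r)
              \<longrightarrow> r < sqrt (1 - 1 / K))"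
proof (intro conjI allI impI)
  fix x :: real assume x: "x > 0"
  define t where "t = x/2"
  define T where "T = t powr \<nu>"
  define f where "f = ser \<nu> (t^2)"
  define g where "g = ser (\<nu>+1) (t^2)"
  define h where "h = ser (\<nu>+2) (t^2)"
  have t: "t > 0" using x by (simp add: t_def)
  have T: "T > 0" using t by (simp add: T_def)
  note bp = bessel_parts[OF x assms, folded t_def, folded T_def f_def g_def h_def]
  have k: "t^2 * (g^2 - f * h) < \<nu> * f * g" unfolding f_def g_def h_def
    using key[OF assms, of "t^2"] by simp
  have "(T * t * g)^2 - (T * f) * (T * t^2 * h) = T^2 * (t^2 * (g^2 - f * h))"
    by (simp add: algebra_simps power2_eq_square)
  also have "\<dots> < T^2 * (\<nu> * f * g)" using k T by simp
  also have "\<dots> = 2 * \<nu> / x * (T * f) * (T * t * g)" using x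
    by (simp add: t_def power2_eq_square field_simps)
  finally show "(besselI (\<nu>+1) x)\<^sup>2 - besselI \<nu> x * besselI (\<nu>+2) x
              < 2 * \<nu> / x * besselI \<nu> x * besselI (\<nu>+1) x" unfolding bp .
next
  fix K r :: real
  assume K: "K > \<nu> + 1" and r: "r > 0" and rr: "r = Psi \<nu> (2 * K * r)"
  define x where "x = 2 * K * r"
  have K0: "K > 1" using K assms by simp
  have x: "x > 0" using K0 r by (simp add: x_def)
  define t where "t = x/2"
  define T where "T = t powr \<nu>"
  define y where "y = t^2"
  define f where "f = ser \<nu> y"
  define g where "g = ser (\<nu>+1) y"
  define h where "h = ser (\<nu>+2) y"
  have tK: "t = K * r" by (simp add: t_def x_def)
  have t: "t > 0" using x by (simp add: t_def)
  have T: "T > 0" using t by (simp add: T_def)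
  have y: "y \<ge> 0" by (simp add: y_def)
  have nu0: "\<nu> \<ge> 0" using assms by simp
  have fp: "f > 0" using ser_pos[OF nu0 y] by (simp add: f_def)
  have gp: "g > 0" using ser_pos[of "\<nu>+1", OF _ y] nu0 by (simp add: g_def)
  note bp = bessel_parts[OF x assms, folded t_def, folded T_def y_def, folded f_def g_def h_def]
  have "r = (T * t * g) / (T * f)" using rr unfolding Psi_def x_def[symmetric] bp .
  then have "r = t * g / f" using T by simp
  then have fK: "f = K * g" using r fp unfolding tK by (simp add: field_simps)
  have k: "y * (g^2 - f * h) < \<nu> * f * g" unfolding f_def g_def h_def
    using key[OF assms y] by simp
  have rec: "f - y * h = (\<nu>+1) * g" unfolding f_def g_def h_def using recur[OF nu0 y] .
  have "y * g^2 + f * g < f^2"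
  proof -
    have "y * (g^2 - f * h) = y * g^2 - f * (y * h)" by (simp add: algebra_simps)
    also have "y * h = f - (\<nu>+1) * g" using rec by simp
    finally have "y * g^2 - f * (f - (\<nu>+1) * g) < \<nu> * f * g" using k by simp
    then show ?thesis by (simp add: algebra_simps power2_eq_square)
  qed
  then have "y * g^2 + K * g^2 < K^2 * g^2" unfolding fK by (simp add: power2_eq_square algebra_simps)
  then have "(y + K) * g^2 < K^2 * g^2" by (simp add: algebra_simps)
  moreover have "g^2 > 0" using gp by simp
  ultimately have "y + K < K^2" by (meson mult_less_cancel_right_pos)
  then have "K^2 * r^2 < K^2 * (1 - 1/K)" using K0
    by (simp add: y_def tK power_mult_distrib right_diff_distrib power2_eq_square algebra_simps)
  then have "r^2 < 1 - 1/K" using K0 by simp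
  then show "r < sqrt (1 - 1 / K)" by (rule real_less_rsqrt)
qed

end
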